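(* Let $X$ be a finitely supported subset of an invariant set such that $\wp_{fs}(X)$ is not FSM Dedekind infinite. Then every finitely supported surjective map $f:X\to X$ is injective.
   Context: Framework (FSM). Work in ZF with a fixed infinite set $A$ of atoms; $S_A$ is the group of bijections of $A$ fixing all but finitely many atoms; $Fix(S)$ is the set of $\pi\in S_A$ fixing each element of $S\subseteq A$; $S$ supports $x$ if $\pi\cdot x=x$ for all $\pi\in Fix(S)$. An invariant set is an $S_A$-set all of whose elements have finite supports; subsets carry $\pi\star Z=\{\pi\cdot z:z\in Z\}$; $\wp_{fs}(X)$ is the set of finitely supported subsets (under $\star$) of the ambient invariant set contained in $X$. A function is finitely supported if there is a finite $S$ such that for all $\pi\in Fix(S)$, $\pi$ preserves domain and codomain and $f(\pi\cdot x)=\pi\cdot f(x)$. A set $Z$ is FSM Dedekind infinite if there is a finitely supported injection from $Z$ onto a finitely supported proper subset of $Z$. *)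

theory Defs
  imports Main
begin

text \<open>Atoms: the (infinite) universe of a type variable 'atom.
  S_A: bijections of the atoms moving only finitely many atoms.\<close>

definition perm_A :: "('atom \<Rightarrow> 'atom) \<Rightarrow> bool" where
  "perm_A \<pi> \<longleftrightarrow> bij \<pi> \<and> finite {a. \<pi> a \<noteq> a}"

definition fixes_all :: "('atom \<Rightarrow> 'atom) \<Rightarrow> 'atom set \<Rightarrow> bool" where
  "fixes_all \<pi> S \<longleftrightarrow> perm_A \<pi> \<and> (\<forall>a\<in>S. \<pi> a = a)"

definition supports :: "(('atom \<Rightarrow> 'atom) \<Rightarrow> 'x \<Rightarrow> 'x) \<Rightarrow> 'atom set \<Rightarrow> 'x \<Rightarrow> bool" where
  "supports act S x \<longleftrightarrow> (\<forall>\<pi>. fixes_all \<pi> S \<longrightarrow> act \<pi> x = x)"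

definition fin_supp :: "(('atom \<Rightarrow> 'atom) \<Rightarrow> 'x \<Rightarrow> 'x) \<Rightarrow> 'x \<Rightarrow> bool" where
  "fin_supp act x \<longleftrightarrow> (\<exists>S. finite S \<and> supports act S x)"

definition invariant_set :: "'x set \<Rightarrow> (('atom \<Rightarrow> 'atom) \<Rightarrow> 'x \<Rightarrow> 'x) \<Rightarrow> bool" where
  "invariant_set U act \<longleftrightarrow>
     (\<forall>x\<in>U. act id x = x) \<and>
     (\<forall>\<pi> \<sigma> x. perm_A \<pi> \<longrightarrow> perm_A \<sigma> \<longrightarrow> x \<in> U \<longrightarrow> act (\<pi> \<circ> \<sigma>) x = act \<pi> (act \<sigma> x)) \<and>
     (\<forall>\<pi> x. perm_A \<pi> \<longrightarrow> x \<in> U \<longrightarrow> act \<pi> x \<in> U) \<and>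
     (\<forall>x\<in>U. fin_supp act x)"

definition set_act :: "(('atom \<Rightarrow> 'atom) \<Rightarrow> 'x \<Rightarrow> 'x) \<Rightarrow> ('atom \<Rightarrow> 'atom) \<Rightarrow> 'x set \<Rightarrow> 'x set" where
  "set_act act \<pi> Z = act \<pi> ` Z"

definition Pow_fs :: "(('atom \<Rightarrow> 'atom) \<Rightarrow> 'x \<Rightarrow> 'x) \<Rightarrow> 'x set \<Rightarrow> 'x set set" where
  "Pow_fs act X = {Z. Z \<subseteq> X \<and> fin_supp (set_act act) Z}"

definition fs_map :: "(('atom \<Rightarrow> 'atom) \<Rightarrow> 'x \<Rightarrow> 'x) \<Rightarrow> (('atom \<Rightarrow> 'atom) \<Rightarrow> 'y \<Rightarrow> 'y)
    \<Rightarrow> 'x set \<Rightarrow> 'y set \<Rightarrow> ('x \<Rightarrow> 'y) \<Rightarrow> bool" where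
  "fs_map act1 act2 D C f \<longleftrightarrow>
     (\<exists>S. finite S \<and> (\<forall>\<pi>. fixes_all \<pi> S \<longrightarrow>
        set_act act1 \<pi> D = D \<and> set_act act2 \<pi> C = C \<and>
        (\<forall>x\<in>D. f (act1 \<pi> x) = act2 \<pi> (f x))))"

definition fsm_dedekind_infinite :: "(('atom \<Rightarrow> 'atom) \<Rightarrow> 'x \<Rightarrow> 'x) \<Rightarrow> 'x set \<Rightarrow> bool" where
  "fsm_dedekind_infinite act Z \<longleftrightarrow>
     (\<exists>g Y. Y \<subset> Z \<and> fin_supp (set_act act) Y \<and> bij_betw g Z Y \<and> fs_map act act Z Y g)"

end

theory Submission
  imports Defs
begin

lemma perm_A_inv: "perm_A \<pi> \<Longrightarrow> perm_A (inv \<pi>)"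
proof -
  assume p: "perm_A \<pi>"
  hence b: "bij \<pi>" and fin: "finite {a. \<pi> a \<noteq> a}" by (auto simp: perm_A_def)
  have "{a. inv \<pi> a \<noteq> a} = {a. \<pi> a \<noteq> a}"
  proof (rule Collect_cong)
    fix a
    have "\<pi> (inv \<pi> a) = a" using b by (simp add: bij_is_surj surj_f_inv_f)
    moreover have "inv \<pi> (\<pi> a) = a" using b by (simp add: bij_is_inj)
    ultimately show "(inv \<pi> a \<noteq> a) = (\<pi> a \<noteq> a)" by metis
  qed
  thus ?thesis using b fin by (simp add: perm_A_def bij_imp_bij_inv)
qed

lemma perm_A_comp: "perm_A \<pi> \<Longrightarrow> perm_A \<sigma> \<Longrightarrow> perm_A (\<pi> \<circ> \<sigma>)"
proof -
  assume a: "perm_A \<pi>" "perm_A \<sigma>"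
  have "{a. (\<pi> \<circ> \<sigma>) a \<noteq> a} \<subseteq> {a. \<sigma> a \<noteq> a} \<union> {a. \<pi> a \<noteq> a}" by auto
  thus ?thesis using a by (auto simp: perm_A_def intro: bij_comp finite_subset)
qed

lemma fixes_all_inv: "fixes_all \<pi> S \<Longrightarrow> fixes_all (inv \<pi>) S"
  unfolding fixes_all_def using perm_A_inv
  by (metis bij_is_inj inv_f_f perm_A_def)

lemma fixes_all_mono: "fixes_all \<pi> T \<Longrightarrow> S \<subseteq> T \<Longrightarrow> fixes_all \<pi> S"
  unfolding fixes_all_def by auto

lemma act_cancel:
  assumes inv: "invariant_set U act" and p: "perm_A \<pi>" and x: "x \<in> U"
  shows "act (inv \<pi>) (act \<pi> x) = x" "act \<pi> (act (inv \<pi>) x) = x"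
proof -
  have b: "bij \<pi>" using p by (simp add: perm_A_def)
  have c: "act (\<pi>' \<circ> \<sigma>) x = act \<pi>' (act \<sigma> x)" if "perm_A \<pi>'" "perm_A \<sigma>" for \<pi>' \<sigma>
    using inv that x unfolding invariant_set_def by blast
  have i: "act id x = x" using inv x unfolding invariant_set_def by blast
  have "inv \<pi> \<circ> \<pi> = id" using b by (simp add: bij_is_inj)
  thus "act (inv \<pi>) (act \<pi> x) = x" using c[OF perm_A_inv[OF p] p] i by simp
  have "\<pi> \<circ> inv \<pi> = id" using b by (meson bij_is_surj surj_iff)
  thus "act \<pi> (act (inv \<pi>) x) = x" using c[OF p perm_A_inv[OF p]] i by simp
qed

lemma Pow_fs_equiv:
  assumes inv: "invariant_set U act" and XU: "X \<subseteq> U" and p: "perm_A \<pi>"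
    and PX: "act \<pi> ` X = X" and Z: "Z \<in> Pow_fs act X"
  shows "act \<pi> ` Z \<in> Pow_fs act X"
proof -
  have ZX: "Z \<subseteq> X" using Z by (simp add: Pow_fs_def)
  obtain S where S: "finite S" "supports (set_act act) S Z"
    using Z by (auto simp: Pow_fs_def fin_supp_def)
  have b: "bij \<pi>" using p by (simp add: perm_A_def)
  have c: "\<And>\<pi>' \<sigma> x. perm_A \<pi>' \<Longrightarrow> perm_A \<sigma> \<Longrightarrow> x \<in> U \<Longrightarrow> act (\<pi>' \<circ> \<sigma>) x = act \<pi>' (act \<sigma> x)"
    using inv unfolding invariant_set_def by blast
  have "supports (set_act act) (\<pi> ` S) (act \<pi> ` Z)"
    unfolding supports_def
  proof (intro allI impI)
    fix \<sigma> assume fs: "fixes_all \<sigma> (\<pi> ` S)"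
    define \<tau> where "\<tau> = inv \<pi> \<circ> \<sigma> \<circ> \<pi>"
    have ps: "perm_A \<sigma>" using fs by (simp add: fixes_all_def)
    have pt: "perm_A \<tau>" unfolding \<tau>_def using perm_A_comp perm_A_inv p ps by metis
    have "fixes_all \<tau> S" unfolding fixes_all_def
    proof
      show "perm_A \<tau>" by (rule pt)
      show "\<forall>a\<in>S. \<tau> a = a" using fs b unfolding fixes_all_def \<tau>_def by (simp add: bij_is_inj)
    qed
    hence tZ: "act \<tau> ` Z = Z" using S(2) by (simp add: supports_def set_act_def)
    have eq: "\<pi> \<circ> \<tau> = \<sigma> \<circ> \<pi>" unfolding \<tau>_def using b
      by (auto simp: fun_eq_iff bij_is_surj surj_f_inv_f)
    have "\<forall>z\<in>Z. act \<sigma> (act \<pi> z) = act \<pi> (act \<tau> z)"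
    proof
      fix z assume "z \<in> Z"
      hence zU: "z \<in> U" using ZX XU by auto
      have "act \<sigma> (act \<pi> z) = act (\<sigma> \<circ> \<pi>) z" using c[OF ps p zU] by simp
      also have "\<dots> = act (\<pi> \<circ> \<tau>) z" using eq by simp
      also have "\<dots> = act \<pi> (act \<tau> z)" using c[OF p pt zU] .
      finally show "act \<sigma> (act \<pi> z) = act \<pi> (act \<tau> z)" .
    qed
    hence "(\<lambda>z. act \<sigma> (act \<pi> z)) ` Z = (\<lambda>z. act \<pi> (act \<tau> z)) ` Z" by (intro image_cong) auto
    hence "act \<sigma> ` act \<pi> ` Z = act \<pi> ` act \<tau> ` Z" by (simp add: image_image)
    thus "set_act act \<sigma> (act \<pi> ` Z) = act \<pi> ` Z" using tZ by (simp add: set_act_def)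
  qed
  moreover have "act \<pi> ` Z \<subseteq> X" using ZX PX by auto
  ultimately show ?thesis using S(1) by (auto simp: Pow_fs_def fin_supp_def)
qed

theorem mainTheorem13:
  fixes U :: "'x set" and act :: "('atom \<Rightarrow> 'atom) \<Rightarrow> 'x \<Rightarrow> 'x"
    and X :: "'x set" and f :: "'x \<Rightarrow> 'x"
  assumes "infinite (UNIV :: 'atom set)"
    and "invariant_set U act"
    and "X \<subseteq> U"
    and "fin_supp (set_act act) X"
    and "\<not> fsm_dedekind_infinite (set_act act) (Pow_fs act X)"
    and "f ` X = X"
    and "fs_map act act X X f"
  shows "inj_on f X"
proof (rule ccontr)
  assume ni: "\<not> inj_on f X"
  note inv = assms(2) and XU = assms(3) and sur = assms(6)
  obtain Sf where Sf: "finite Sf" and Sfp: "\<And>\<pi>. fixes_all \<pi> Sf \<Longrightarrow>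
        act \<pi> ` X = X \<and> (\<forall>x\<in>X. f (act \<pi> x) = act \<pi> (f x))"
  proof -
    obtain S where S1: "finite S" and S2: "\<forall>\<pi>. fixes_all \<pi> S \<longrightarrow>
        set_act act \<pi> X = X \<and> set_act act \<pi> X = X \<and> (\<forall>x\<in>X. f (act \<pi> x) = act \<pi> (f x))"
      using assms(7) unfolding fs_map_def by blast
    show ?thesis
    proof (rule that[OF S1])
      fix \<pi> assume "fixes_all \<pi> S"
      thus "act \<pi> ` X = X \<and> (\<forall>x\<in>X. f (act \<pi> x) = act \<pi> (f x))" using S2 by (simp add: set_act_def)
    qed
  qed
  have cU: "\<And>\<pi> x. perm_A \<pi> \<Longrightarrow> x \<in> U \<Longrightarrow> act \<pi> x \<in> U"
    using inv by (simp add: invariant_set_def)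
  define P where "P Z = {x\<in>X. f x \<in> Z}" for Z
  have PA: "act \<pi> ` P Z = P (act \<pi> ` Z)" if fp: "fixes_all \<pi> Sf" and ZX: "Z \<subseteq> X" for \<pi> Z
  proof
    have pX: "act \<pi> ` X = X" and fe: "\<forall>x\<in>X. f (act \<pi> x) = act \<pi> (f x)" using Sfp[OF fp] by auto
    have p: "perm_A \<pi>" using fp by (simp add: fixes_all_def)
    show "act \<pi> ` P Z \<subseteq> P (act \<pi> ` Z)" using pX fe by (auto simp: P_def)
    show "P (act \<pi> ` Z) \<subseteq> act \<pi> ` P Z"
    proof
      fix y assume "y \<in> P (act \<pi> ` Z)"
      then obtain z where y: "y \<in> X" and z: "z \<in> Z" and fy: "f y = act \<pi> z" by (auto simp: P_def)
      obtain x where x: "x \<in> X" and yx: "y = act \<pi> x" using y pX by blast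
      have "act \<pi> (f x) = act \<pi> z" using fe x yx fy by simp
      hence "act (inv \<pi>) (act \<pi> (f x)) = act (inv \<pi>) (act \<pi> z)" by simp
      moreover have fxU: "f x \<in> U" using x sur XU by blast
      moreover have zU: "z \<in> U" using z ZX XU by blast
      ultimately have "f x = z" using act_cancel(1)[OF inv p fxU] act_cancel(1)[OF inv p zU] by simp
      thus "y \<in> act \<pi> ` P Z" using x z yx by (auto simp: P_def)
    qed
  qed
  have PP: "P Z \<in> Pow_fs act X" if Z: "Z \<in> Pow_fs act X" for Z
  proof -
    obtain S where S: "finite S" "supports (set_act act) S Z"
      using Z by (auto simp: Pow_fs_def fin_supp_def)
    have ZX: "Z \<subseteq> X" using Z by (simp add: Pow_fs_def)
    have "supports (set_act act) (Sf \<union> S) (P Z)" unfolding supports_def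
    proof (intro allI impI)
      fix \<pi> assume fp: "fixes_all \<pi> (Sf \<union> S)"
      have "act \<pi> ` Z = Z" using S(2) fixes_all_mono[OF fp] by (simp add: supports_def set_act_def)
      thus "set_act act \<pi> (P Z) = P Z" using PA[OF fixes_all_mono[OF fp] ZX] by (simp add: set_act_def)
    qed
    thus ?thesis using S(1) Sf by (auto simp: Pow_fs_def fin_supp_def P_def)
  qed
  have fP: "f ` P Z = Z" if "Z \<subseteq> X" for Z
  proof
    show "f ` P Z \<subseteq> Z" by (auto simp: P_def)
    show "Z \<subseteq> f ` P Z"
    proof
      fix z assume "z \<in> Z"
      hence "z \<in> f ` X" using that sur by auto
      then obtain x where "x \<in> X" "z = f x" by blast
      thus "z \<in> f ` P Z" using \<open>z \<in> Z\<close> by (auto simp: P_def)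
    qed
  qed
  have injP: "inj_on P (Pow_fs act X)"
    by (rule inj_on_inverseI[where g="\<lambda>Z. f ` Z"]) (simp add: fP Pow_fs_def)
  obtain x y where xy: "x \<in> X" "y \<in> X" "x \<noteq> y" "f x = f y" using ni by (auto simp: inj_on_def)
  have sx: "{x} \<in> Pow_fs act X"
  proof -
    obtain S where "finite S" "supports act S x" proof -
      have "\<forall>x\<in>U. fin_supp act x" using inv by (simp add: invariant_set_def)
      hence "fin_supp act x" using xy XU by blast
      thus ?thesis using that unfolding fin_supp_def by blast
    qed
    hence "finite S \<and> supports (set_act act) S {x}" by (simp add: supports_def set_act_def)
    thus ?thesis using xy by (auto simp: Pow_fs_def fin_supp_def)
  qed
  have nsx: "{x} \<notin> P ` Pow_fs act X"
  proof
    assume "{x} \<in> P ` Pow_fs act X"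
    then obtain Z where "{x} = P Z" by blast
    hence "x \<in> P Z" by auto
    hence "y \<in> P Z" using xy by (simp add: P_def)
    thus False using \<open>{x} = P Z\<close> xy by auto
  qed
  have Ysub: "P ` Pow_fs act X \<subset> Pow_fs act X" unfolding psubset_eq using PP sx nsx by auto
  have PowE: "set_act act \<pi> ` Pow_fs act X = Pow_fs act X" if fp: "fixes_all \<pi> Sf" for \<pi>
  proof
    have p: "perm_A \<pi>" using fp by (simp add: fixes_all_def)
    have fi: "fixes_all (inv \<pi>) Sf" by (rule fixes_all_inv[OF fp])
    have pi: "perm_A (inv \<pi>)" using fi by (simp add: fixes_all_def)
    have X1: "act \<pi> ` X = X" using Sfp[OF fp] by auto
    have X2: "act (inv \<pi>) ` X = X" using Sfp[OF fi] by auto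
    show "set_act act \<pi> ` Pow_fs act X \<subseteq> Pow_fs act X"
      using Pow_fs_equiv[OF inv XU p X1] by (auto simp: set_act_def)
    show "Pow_fs act X \<subseteq> set_act act \<pi> ` Pow_fs act X"
    proof
      fix Z assume Z: "Z \<in> Pow_fs act X"
      have "act \<pi> ` act (inv \<pi>) ` Z = Z"
      proof -
        have "\<forall>z\<in>Z. act \<pi> (act (inv \<pi>) z) = z"
          using act_cancel(2)[OF inv p] Z XU by (auto simp: Pow_fs_def)
        hence "(\<lambda>z. act \<pi> (act (inv \<pi>) z)) ` Z = id ` Z" by (intro image_cong) auto
        thus ?thesis by (simp add: image_image)
      qed
      moreover have "act (inv \<pi>) ` Z \<in> Pow_fs act X" using Pow_fs_equiv[OF inv XU pi X2 Z] .
      ultimately show "Z \<in> set_act act \<pi> ` Pow_fs act X" unfolding set_act_def by (metis image_eqI)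
    qed
  qed
  have YE: "set_act (set_act act) \<pi> (P ` Pow_fs act X) = P ` Pow_fs act X" if fp: "fixes_all \<pi> Sf" for \<pi>
  proof -
    have "set_act (set_act act) \<pi> (P ` Pow_fs act X) = (\<lambda>Z. act \<pi> ` P Z) ` Pow_fs act X"
      by (simp add: set_act_def image_image)
    also have "\<dots> = (\<lambda>Z. P (act \<pi> ` Z)) ` Pow_fs act X"
      using PA[OF fp] by (auto simp: Pow_fs_def intro!: image_cong)
    also have "\<dots> = P ` (set_act act \<pi> ` Pow_fs act X)" by (simp add: image_image set_act_def)
    also have "\<dots> = P ` Pow_fs act X" using PowE[OF fp] by simp
    finally show ?thesis .
  qed
  have "fsm_dedekind_infinite (set_act act) (Pow_fs act X)"
    unfolding fsm_dedekind_infinite_def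
  proof (intro exI conjI)
    show "P ` Pow_fs act X \<subset> Pow_fs act X" by (rule Ysub)
    show "fin_supp (set_act (set_act act)) (P ` Pow_fs act X)"
      unfolding fin_supp_def supports_def using Sf YE by blast
    show "bij_betw P (Pow_fs act X) (P ` Pow_fs act X)" using injP by (simp add: bij_betw_def)
    show "fs_map (set_act act) (set_act act) (Pow_fs act X) (P ` Pow_fs act X) P"
      unfolding fs_map_def
    proof (intro exI conjI allI impI)
      show "finite Sf" by (rule Sf)
      fix \<pi> assume fp: "fixes_all \<pi> Sf"
      show "set_act (set_act act) \<pi> (Pow_fs act X) = Pow_fs act X" using PowE[OF fp] by (simp add: set_act_def)
      show "set_act (set_act act) \<pi> (P ` Pow_fs act X) = P ` Pow_fs act X" by (rule YE[OF fp])
      show "\<forall>Z\<in>Pow_fs act X. P (set_act act \<pi> Z) = set_act act \<pi> (P Z)"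
        using PA[OF fp] by (simp add: set_act_def Pow_fs_def)
    qed
  qed
  thus False using assms(5) by simp
qed

end
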